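(* In an inventory system as in the context, every admissible policy $\pi$ satisfies $J_\pi(0)\ge N\,G(M)$, where $M=\frac{\Delta+\sum_{k=0}^{N-1}\mu_k}{N}$. In particular $J^*(0)\ge N\,G(M)$.
   Context: Inventory system: $N\ge1$; $G:\mathbb{R}_{\ge0}\to\mathbb{R}_{\ge0}$ is strictly convex and increasing with $G(0)=0$. Demands $w_0,\dots,w_{N-1}$ are independent random variables; $w_k$ has mean $\mu_k$, variance $\sigma_k^2$, and support exactly $[\mu_k-\Delta,\mu_k+\Delta]$, where $\Delta\ge0$ and $\mu_k-\Delta>0$ for all $k$. A (Markov) policy is a sequence $\pi=(\pi_0,\dots,\pi_{N-1})$ of measurable maps $\pi_k:\mathbb{R}_{\ge0}\to\mathbb{R}_{\ge0}$; the state evolves by $x_0=0$, $x_{k+1}=x_k+\pi_k(x_k)-w_k$. A policy is admissible if $x_k\ge0$ almost surely for all $k\in\{1,\dots,N\}$. Its expected cost is $J_\pi(0)=\sum_{k=0}^{N-1}\mathbb{E}[G(\pi_k(x_k))]$, and $J^*(0)$ is the infimum of $J_\pi(0)$ over admissible policies. *)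

theory Defs
  imports "HOL-Probability.Probability"
begin

definition strict_convex_on :: "real set \<Rightarrow> (real \<Rightarrow> real) \<Rightarrow> bool" where
  "strict_convex_on S f \<longleftrightarrow> convex S \<and>
    (\<forall>x\<in>S. \<forall>y\<in>S. \<forall>u. x \<noteq> y \<and> 0 < u \<and> u < 1 \<longrightarrow>
        f (u * x + (1 - u) * y) < u * f x + (1 - u) * f y)"

definition rv_support :: "'a measure \<Rightarrow> ('a \<Rightarrow> real) \<Rightarrow> real set" where
  "rv_support M X = {x. \<forall>e>0. 0 < measure M {\<omega>\<in>space M. \<bar>X \<omega> - x\<bar> < e}}"

fun state :: "(nat \<Rightarrow> real \<Rightarrow> real) \<Rightarrow> (nat \<Rightarrow> 'a \<Rightarrow> real) \<Rightarrow> nat \<Rightarrow> 'a \<Rightarrow> real" where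
  "state pol w 0 \<omega> = 0"
| "state pol w (Suc k) \<omega> = state pol w k \<omega> + pol k (state pol w k \<omega>) - w k \<omega>"

text \<open>A Markov policy: for k < N, a Borel map pi_k with pi_k(x) >= 0 for x >= 0
  (only its restriction to the nonnegative reals matters).\<close>
definition is_policy :: "nat \<Rightarrow> (nat \<Rightarrow> real \<Rightarrow> real) \<Rightarrow> bool" where
  "is_policy N pol \<longleftrightarrow> (\<forall>k<N. pol k \<in> borel_measurable borel \<and> (\<forall>x\<ge>0. pol k x \<ge> 0))"

definition admissible :: "'a measure \<Rightarrow> (nat \<Rightarrow> 'a \<Rightarrow> real) \<Rightarrow> nat \<Rightarrow> (nat \<Rightarrow> real \<Rightarrow> real) \<Rightarrow> bool" where
  "admissible M w N pol \<longleftrightarrow> is_policy N pol \<and>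
     (\<forall>k\<in>{1..N}. AE \<omega> in M. state pol w k \<omega> \<ge> 0)"

text \<open>Expected cost J_pi(0) (in [0,\<infinity>], since G >= 0).\<close>
definition cost :: "'a measure \<Rightarrow> (real \<Rightarrow> real) \<Rightarrow> (nat \<Rightarrow> 'a \<Rightarrow> real) \<Rightarrow> nat \<Rightarrow> (nat \<Rightarrow> real \<Rightarrow> real) \<Rightarrow> ennreal" where
  "cost M G w N pol = (\<Sum>k<N. \<integral>\<^sup>+ \<omega>. ennreal (G (pol k (state pol w k \<omega>))) \<partial>M)"

definition opt_cost :: "'a measure \<Rightarrow> (real \<Rightarrow> real) \<Rightarrow> (nat \<Rightarrow> 'a \<Rightarrow> real) \<Rightarrow> nat \<Rightarrow> ennreal" where
  "opt_cost M G w N = (INF pol \<in> {pol. admissible M w N pol}. cost M G w N pol)"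

end

theory Submission
  imports Defs
begin


lemma state_sum: "state pol w k \<omega> = (\<Sum>i<k. pol i (state pol w i \<omega>) - w i \<omega>)"
  by (induction k) auto

lemma state_restrict:
  "k \<le> n \<Longrightarrow> state pol w k \<omega> = state pol (\<lambda>i v. v i) k (restrict (\<lambda>i. w i \<omega>) {..<n})"
  by (induction k) auto

lemma state_meas_Pi:
  assumes "\<forall>k<n. pol k \<in> borel_measurable borel"
  shows "k \<le> n \<Longrightarrow> (\<lambda>v. state pol (\<lambda>i v. v i) k v) \<in> borel_measurable (PiM {..<n} (\<lambda>_. borel::real measure))"
proof (induction k)
  case 0 then show ?case by simp
next
  case (Suc k)
  have p: "pol k \<in> borel_measurable borel" using assms Suc by auto
  have "(\<lambda>v. pol k (state pol (\<lambda>i v. v i) k v)) \<in> borel_measurable (PiM {..<n} (\<lambda>_. borel::real measure))"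
    using Suc by (intro measurable_compose[OF _ p]) auto
  moreover have "(\<lambda>v. v k) \<in> borel_measurable (PiM {..<n} (\<lambda>_. borel::real measure))"
    using Suc by (intro measurable_component_singleton) auto
  ultimately show ?case using Suc by simp
qed

lemma state_meas:
  assumes "\<forall>k<n. pol k \<in> borel_measurable borel" "\<forall>k<n. w k \<in> borel_measurable M"
  shows "k \<le> n \<Longrightarrow> state pol w k \<in> borel_measurable M"
proof (induction k)
  case 0 then show ?case by simp
next
  case (Suc k)
  have p: "pol k \<in> borel_measurable borel" using assms Suc by auto
  have "(\<lambda>v. pol k (state pol w k v)) \<in> borel_measurable M"
    using Suc by (intro measurable_compose[OF _ p]) auto
  moreover have "w k \<in> borel_measurable M" using assms Suc by auto
  ultimately show ?case using Suc by simp
qed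

lemma weak_convex:
  assumes sc: "strict_convex_on {0..} G" and x: "x \<ge> 0" and y: "y \<ge> 0" and t: "0 \<le> t" "t \<le> 1"
  shows "G ((1 - t) * x + t * y) \<le> (1 - t) * G x + t * G y"
proof -
  consider "x = y" | "t = 0" | "t = 1" | "x \<noteq> y" "0 < t" "t < 1" using t by linarith
  then show ?thesis
  proof cases
    case 1 then show ?thesis by (simp add: algebra_simps)
  next
    case 2 then show ?thesis by simp
  next
    case 3 then show ?thesis by simp
  next
    case 4
    have "G ((1 - t) * x + (1 - (1 - t)) * y) < (1 - t) * G x + (1 - (1 - t)) * G y"
      using sc x y 4 unfolding strict_convex_on_def by (intro sc[unfolded strict_convex_on_def, THEN conjunct2, rule_format]) auto
    then show ?thesis by simp
  qed
qed

lemma convex_ext: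
  assumes sc: "strict_convex_on {0..} G" and mono: "strict_mono_on {0..} G"
  shows "convex_on UNIV (\<lambda>x. G (max x 0))"
proof (rule convex_onI)
  fix t x y :: real assume t: "0 < t" "t < 1"
  define z where "z = (1 - t) * max x 0 + t * max y 0"
  have "max ((1 - t) *\<^sub>R x + t *\<^sub>R y) 0 \<le> z"
  proof -
    have "(1 - t) * x \<le> (1 - t) * max x 0" using t by (intro mult_left_mono) auto
    moreover have "t * y \<le> t * max y 0" using t by (intro mult_left_mono) auto
    moreover have "0 \<le> (1 - t) * max x 0" "0 \<le> t * max y 0" using t by auto
    ultimately show ?thesis unfolding z_def by simp
  qed
  moreover have "z \<ge> 0" unfolding z_def using t by auto
  ultimately have "G (max ((1 - t) *\<^sub>R x + t *\<^sub>R y) 0) \<le> G z"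
    by (intro strict_mono_on_leD[OF mono]) auto
  also have "G z \<le> (1 - t) * G (max x 0) + t * G (max y 0)"
    unfolding z_def using t by (intro weak_convex[OF sc]) auto
  finally show "G (max ((1 - t) *\<^sub>R x + t *\<^sub>R y) 0) \<le> (1 - t) * G (max x 0) + t * G (max y 0)" .
qed auto

lemma G_lin:
  assumes sc: "strict_convex_on {0..} G" and mono: "strict_mono_on {0..} G" and G0: "G 0 = 0"
    and x: "x \<ge> 0"
  shows "x \<le> 1 + G x / G 1"
proof -
  have G1: "G 1 > 0" using mono G0 by (metis atLeast_iff le_numeral_extra(1) strict_mono_onD zero_less_one order_refl)
  have Gx: "G x \<ge> 0" using strict_mono_on_leD[OF mono, of 0 x] x G0 by auto
  show ?thesis
  proof (cases "x \<le> 1")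
    case True then show ?thesis using G1 Gx by (smt (verit) divide_nonneg_pos)
  next
    case False
    have "G ((1 - 1/x) * 0 + (1/x) * x) \<le> (1 - 1/x) * G 0 + (1/x) * G x"
      using False x by (intro weak_convex[OF sc]) auto
    then have "G 1 \<le> G x / x" using False G0 by simp
    then have "x * G 1 \<le> G x" using False by (simp add: field_simps)
    then have "x \<le> G x / G 1" using G1 by (simp add: field_simps)
    then show ?thesis by simp
  qed
qed



theorem mainTheorem6:
  fixes M :: "'a measure" and G :: "real \<Rightarrow> real" and w :: "nat \<Rightarrow> 'a \<Rightarrow> real"
    and \<mu> \<sigma> :: "nat \<Rightarrow> real" and \<Delta> :: real and N :: nat
  assumes "prob_space M"
    and "N \<ge> 1"
    and "strict_convex_on {0..} G"
    and "strict_mono_on {0..} G"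
    and "G 0 = 0"
    and "\<forall>x\<ge>0. G x \<ge> 0"
    and "\<forall>k<N. w k \<in> borel_measurable M"
    and "prob_space.indep_vars M (\<lambda>_. borel) w {..<N}"
    and "\<forall>k<N. integrable M (w k) \<and> prob_space.expectation M (w k) = \<mu> k"
    and "\<forall>k<N. prob_space.variance M (w k) = (\<sigma> k)\<^sup>2"
    and "\<Delta> \<ge> 0"
    and "\<forall>k<N. \<mu> k - \<Delta> > 0"
    and "\<forall>k<N. rv_support M (w k) = {\<mu> k - \<Delta> .. \<mu> k + \<Delta>}"
  shows "(\<forall>pol. admissible M w N pol \<longrightarrow>
            ennreal (real N * G ((\<Delta> + (\<Sum>k<N. \<mu> k)) / real N)) \<le> cost M G w N pol)
         \<and> ennreal (real N * G ((\<Delta> + (\<Sum>k<N. \<mu> k)) / real N)) \<le> opt_cost M G w N"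
proof -
  interpret prob_space M by (rule assms(1))
  note sc = assms(3) and mono = assms(4) and G0 = assms(5) and Gnn = assms(6)
    and wmeas = assms(7) and ind = assms(8) and wint = assms(9) and supp = assms(13)
  define m where "m = (\<Delta> + (\<Sum>k<N. \<mu> k)) / real N"
  define H where "H = (\<lambda>x. G (max x 0))"
  have Hconv: "convex_on UNIV H" unfolding H_def by (rule convex_ext[OF sc mono])
  have H_mono: "H x \<le> H y" if "x \<le> y" for x y
    unfolding H_def using that by (intro strict_mono_on_leD[OF mono]) auto
  have H_meas: "H \<in> borel_measurable borel"
    by (rule borel_measurable_mono) (auto simp: mono_def H_mono)
  have Hnn: "H x \<ge> 0" for x unfolding H_def using Gnn by auto
  obtain n where Nn: "N = Suc n" using assms(2) by (cases N) auto
  have nN: "n < N" using Nn by simp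
  have m_nn: "m \<ge> 0"
    unfolding m_def using assms(11,12) by (intro divide_nonneg_nonneg add_nonneg_nonneg sum_nonneg) force+
  have main: "ennreal (real N * G m) \<le> cost M G w N pol" if adm: "admissible M w N pol" for pol
  proof -
    have pol_meas: "\<forall>k<N. pol k \<in> borel_measurable borel"
      and pol_nn: "\<And>k x. k<N \<Longrightarrow> x\<ge>0 \<Longrightarrow> pol k x \<ge> 0"
      using adm unfolding admissible_def is_policy_def by auto
    define u where "u k \<omega> = pol k (state pol w k \<omega>)" for k \<omega>
    have st_meas: "\<And>k. k \<le> N \<Longrightarrow> state pol w k \<in> borel_measurable M"
      using state_meas[OF pol_meas wmeas] by auto
    have u_meas: "\<And>k. k < N \<Longrightarrow> u k \<in> borel_measurable M"
      unfolding u_def using st_meas pol_meas by (intro measurable_compose[of _ M borel "pol _"]) auto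
    have Hu_meas: "\<And>k. k < N \<Longrightarrow> (\<lambda>\<omega>. H (u k \<omega>)) \<in> borel_measurable M"
      using u_meas H_meas by (intro measurable_compose[of _ M borel H]) auto
    have AE_st: "AE \<omega> in M. \<forall>k\<in>{..N}. state pol w k \<omega> \<ge> 0"
    proof (rule AE_finite_allI)
      fix k assume k: "k \<in> {..N}"
      show "AE \<omega> in M. state pol w k \<omega> \<ge> 0"
      proof (cases "k = 0")
        case False
        then have "k \<in> {1..N}" using k by auto
        then show ?thesis using adm unfolding admissible_def by blast
      qed simp
    qed simp
    have AE_u: "AE \<omega> in M. u k \<omega> \<ge> 0" if k: "k<N" for k
      using AE_st by eventually_elim (use k in \<open>auto simp: u_def intro!: pol_nn\<close>)
    have cost_H: "cost M G w N pol = (\<Sum>k<N. \<integral>\<^sup>+\<omega>. ennreal (H (u k \<omega>)) \<partial>M)"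
      unfolding cost_def
    proof (intro sum.cong refl nn_integral_cong_AE)
      fix k assume "k \<in> {..<N}"
      then have "AE \<omega> in M. u k \<omega> \<ge> 0" by (intro AE_u) auto
      then show "AE \<omega> in M. ennreal (G (pol k (state pol w k \<omega>))) = ennreal (H (u k \<omega>))"
        by eventually_elim (auto simp: H_def u_def)
    qed
    show ?thesis
    proof (cases "\<forall>k<N. integrable M (\<lambda>\<omega>. H (u k \<omega>))")
      case False
      then obtain k where k: "k<N" "\<not> integrable M (\<lambda>\<omega>. H (u k \<omega>))" by auto
      have "\<not> (\<integral>\<^sup>+ \<omega>. ennreal (H (u k \<omega>)) \<partial>M) < \<infinity>"
        using k integrableI_nonneg[OF Hu_meas[OF k(1)]] Hnn by auto
      then have "(\<integral>\<^sup>+ \<omega>. ennreal (H (u k \<omega>)) \<partial>M) = \<infinity>"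
        by (simp add: not_less top_unique)
      then have "cost M G w N pol = \<infinity>"
        unfolding cost_H using k(1) by (auto simp: ennreal_sum_eq_top)
      then show ?thesis by simp
    next
      case True
      have intH: "\<And>k. k<N \<Longrightarrow> integrable M (\<lambda>\<omega>. H (u k \<omega>))" using True by auto
      have G1: "G 1 > 0" using mono G0
        by (metis atLeast_iff le_numeral_extra(1) strict_mono_onD zero_less_one order_refl)
      have int_u: "integrable M (u k)" if k: "k<N" for k
      proof (rule Bochner_Integration.integrable_bound[of _ "\<lambda>\<omega>. 1 + H (u k \<omega>) / G 1"])
        show "integrable M (\<lambda>\<omega>. 1 + H (u k \<omega>) / G 1)" using intH[OF k] by auto
        show "u k \<in> borel_measurable M" using u_meas k by auto
        show "AE \<omega> in M. norm (u k \<omega>) \<le> norm (1 + H (u k \<omega>) / G 1)"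
          using AE_u[OF k] proof eventually_elim
          case (elim \<omega>)
          have "u k \<omega> \<le> 1 + G (u k \<omega>) / G 1" by (rule G_lin[OF sc mono G0 elim])
          then show ?case using elim by (simp add: H_def)
        qed
      qed
      have EH_nn: "\<And>k. k<N \<Longrightarrow> expectation (\<lambda>\<omega>. H (u k \<omega>)) \<ge> 0"
        using Hnn by (intro integral_nonneg_AE) auto
      have costeq: "cost M G w N pol = ennreal (\<Sum>k<N. expectation (\<lambda>\<omega>. H (u k \<omega>)))"
      proof -
        have "cost M G w N pol = (\<Sum>k<N. ennreal (expectation (\<lambda>\<omega>. H (u k \<omega>))))"
          unfolding cost_H using intH Hnn by (intro sum.cong refl nn_integral_eq_integral) auto
        also have "\<dots> = ennreal (\<Sum>k<N. expectation (\<lambda>\<omega>. H (u k \<omega>)))"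
          using EH_nn by (intro sum_ennreal) auto
        finally show ?thesis .
      qed
      have jen: "H (expectation (u k)) \<le> expectation (\<lambda>\<omega>. H (u k \<omega>))" if k: "k<N" for k
        by (rule jensens_inequality[where I=UNIV]) (auto simp: int_u k intH Hconv)
      have key: "(\<Sum>k<N. expectation (u k)) \<ge> \<Delta> + (\<Sum>k<N. \<mu> k)"
      proof -
        define Y where "Y \<omega> = state pol w n \<omega> + u n \<omega>" for \<omega>
        define c where "c = \<mu> n + \<Delta>"
        have Y_meas: "Y \<in> borel_measurable M"
          unfolding Y_def using st_meas[of n] u_meas[OF nN] Nn by auto
        have wn_meas: "w n \<in> borel_measurable M" using wmeas nN by auto
        have AE_Yw: "AE \<omega> in M. w n \<omega> \<le> Y \<omega>"
          using AE_st
        proof eventually_elim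
          case (elim \<omega>)
          then have "state pol w (Suc n) \<omega> \<ge> 0" using Nn by (metis atMost_iff order_refl)
          then show ?case by (simp add: Y_def u_def)
        qed
        define F where "F v = state pol (\<lambda>i v. v i) n v + pol n (state pol (\<lambda>i v. v i) n v)" for v :: "nat \<Rightarrow> real"
        have F_meas: "F \<in> borel_measurable (PiM {..<n} (\<lambda>_. borel::real measure))"
        proof -
          have s: "(\<lambda>v. state pol (\<lambda>i v. v i) n v) \<in> borel_measurable (PiM {..<n} (\<lambda>_. borel::real measure))"
            using pol_meas Nn by (intro state_meas_Pi) auto
          have p: "pol n \<in> borel_measurable borel" using pol_meas nN by auto
          show ?thesis unfolding F_def using s measurable_compose[OF s p] by auto
        qed
        have proj_meas: "(\<lambda>v. v n) \<in> borel_measurable (PiM {n} (\<lambda>_. borel::real measure))"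
          by (rule measurable_component_singleton) auto
        have indYW: "indep_var borel Y borel (w n)"
        proof -
          have "indep_var (PiM {..<n} (\<lambda>_. borel)) (\<lambda>\<omega>. restrict (\<lambda>i. w i \<omega>) {..<n})
                  (PiM {n} (\<lambda>_. borel)) (\<lambda>\<omega>. restrict (\<lambda>i. w i \<omega>) {n})"
            by (rule indep_var_restrict[OF ind]) (auto simp: Nn)
          from indep_var_compose[OF this F_meas proj_meas]
          have "indep_var borel (F \<circ> (\<lambda>\<omega>. restrict (\<lambda>i. w i \<omega>) {..<n})) borel
                  ((\<lambda>v. v n) \<circ> (\<lambda>\<omega>. restrict (\<lambda>i. w i \<omega>) {n}))" .
          moreover have "F \<circ> (\<lambda>\<omega>. restrict (\<lambda>i. w i \<omega>) {..<n}) = Y"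
            by (rule ext) (simp add: F_def Y_def u_def state_restrict[of n n pol w])
          moreover have "(\<lambda>v. v n) \<circ> (\<lambda>\<omega>. restrict (\<lambda>i. w i \<omega>) {n}) = w n"
            by (rule ext) simp
          ultimately show ?thesis by simp
        qed
        have AE_Ya: "AE \<omega> in M. a \<le> Y \<omega>" if a: "a < c" for a
        proof (rule ccontr)
          assume nAE: "\<not> (AE \<omega> in M. a \<le> Y \<omega>)"
          define A where "A = Y -` {..<a} \<inter> space M"
          define B where "B = w n -` {a<..} \<inter> space M"
          have A_sets: "A \<in> events" unfolding A_def by (rule measurable_sets[OF Y_meas]) auto
          have B_sets: "B \<in> events" unfolding B_def by (rule measurable_sets[OF wn_meas]) auto
          have "prob A \<noteq> 0"
          proof
            assume "prob A = 0"
            then have "AE \<omega> in M. \<omega> \<notin> A" using prob_eq_0[OF A_sets] by simp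
            then have "AE \<omega> in M. a \<le> Y \<omega>"
              using AE_space by eventually_elim (auto simp: A_def)
            then show False using nAE by simp
          qed
          then have PA: "prob A > 0" using measure_nonneg[of M A] by linarith
          have "c \<in> rv_support M (w n)" using supp nN assms(11) by (auto simp: c_def)
          then have "0 < measure M {\<omega>\<in>space M. \<bar>w n \<omega> - c\<bar> < c - a}"
            using a unfolding rv_support_def by auto
          also have "\<dots> \<le> prob B"
            using B_sets by (intro finite_measure_mono) (auto simp: B_def)
          finally have PB: "prob B > 0" .
          have "prob ((\<lambda>x. (Y x, w n x)) -` ({..<a} \<times> {a<..}) \<inter> space M) = prob A * prob B"
            unfolding A_def B_def by (rule indep_varD[OF indYW]) auto
          moreover have "(\<lambda>x. (Y x, w n x)) -` ({..<a} \<times> {a<..}) \<inter> space M = A \<inter> B"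
            by (auto simp: A_def B_def)
          moreover have "prob (A \<inter> B) = 0"
          proof -
            have "AE \<omega> in M. \<omega> \<notin> A \<inter> B"
              using AE_Yw by eventually_elim (auto simp: A_def B_def)
            then show ?thesis using prob_eq_0[of "A \<inter> B"] A_sets B_sets by auto
          qed
          ultimately show False using PA PB by simp
        qed
        have Y_eq: "Y \<omega> = (\<Sum>k<N. u k \<omega>) - (\<Sum>k<n. w k \<omega>)" for \<omega>
          unfolding Y_def using state_sum[of pol w n \<omega>]
          by (simp add: Nn u_def sum_subtractf)
        have int_sum_u: "integrable M (\<lambda>\<omega>. \<Sum>k<N. u k \<omega>)" using int_u by auto
        have int_sum_w: "integrable M (\<lambda>\<omega>. \<Sum>k<n. w k \<omega>)" using wint Nn by auto
        have intY: "integrable M Y" unfolding Y_eq[abs_def] using int_sum_u int_sum_w by auto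
        have EY_eq: "expectation Y = (\<Sum>k<N. expectation (u k)) - (\<Sum>k<n. \<mu> k)"
        proof -
          have "expectation Y = expectation (\<lambda>\<omega>. \<Sum>k<N. u k \<omega>) - expectation (\<lambda>\<omega>. \<Sum>k<n. w k \<omega>)"
            unfolding Y_eq[abs_def] using int_sum_u int_sum_w by (rule Bochner_Integration.integral_diff)
          also have "\<dots> = (\<Sum>k<N. expectation (u k)) - (\<Sum>k<n. expectation (w k))"
            using int_u wint Nn by (subst (1 2) Bochner_Integration.integral_sum) auto
          also have "(\<Sum>k<n. expectation (w k)) = (\<Sum>k<n. \<mu> k)"
            using wint Nn by (intro sum.cong) auto
          finally show ?thesis .
        qed
        have EY: "c \<le> expectation Y"
        proof (rule dense_le)
          fix a assume a: "a < c"
          have "expectation (\<lambda>_. a) \<le> expectation Y"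
            using AE_Ya[OF a] intY by (intro integral_mono_AE) auto
          then show "a \<le> expectation Y" by (simp add: prob_space)
        qed
        show ?thesis using EY EY_eq by (simp add: c_def Nn)
      qed
      have "real N * H m \<le> real N * H ((\<Sum>k<N. expectation (u k)) / real N)"
        using key Nn by (intro mult_left_mono H_mono) (auto simp: m_def divide_right_mono)
      also have "H ((\<Sum>k<N. expectation (u k)) / real N) = H (\<Sum>k<N. (1 / real N) *\<^sub>R expectation (u k))"
        by (simp add: sum_divide_distrib)
      also have "real N * \<dots> \<le> real N * (\<Sum>k<N. (1 / real N) * H (expectation (u k)))"
        using Nn by (intro mult_left_mono convex_on_sum[OF _ _ Hconv]) auto
      also have "\<dots> = (\<Sum>k<N. H (expectation (u k)))"
        using Nn by (subst sum_distrib_left[symmetric]) (simp del: sum.lessThan_Suc)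
      also have "\<dots> \<le> (\<Sum>k<N. expectation (\<lambda>\<omega>. H (u k \<omega>)))"
        by (intro sum_mono jen) auto
      finally have "real N * G m \<le> (\<Sum>k<N. expectation (\<lambda>\<omega>. H (u k \<omega>)))"
        using m_nn by (simp add: H_def)
      then show ?thesis unfolding costeq by (rule ennreal_leI)
    qed
  qed
  show ?thesis
    using main unfolding m_def opt_cost_def by (auto intro!: INF_greatest)
qed

end
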